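(* Let $\Delta$ be a pure $d$-dimensional simplicial complex on vertex set $[n]$, and $\mathbb{K}$ a field. For every $1\le i\le d-1$ there exists $j\ge1$ such that $\mathcal{F}(\Delta^{(i)})^{(j)}\neq\mathcal{F}(\Delta^{(i)})^j$ in $\mathbb{K}[x_1,\dots,x_n]$.
   Context: $\Delta^{(i)}$ is the $i$-th skeleton of $\Delta$ (faces of dimension at most $i$). For a simplicial complex $\Gamma$ with facets $F_1,\dots,F_s$, $\mathcal{F}(\Gamma)=(x_{F_1},\dots,x_{F_s})$ with $x_F=\prod_{j\in F}x_j$. For a squarefree monomial ideal $I$, $I^{(m)}=\bigcap_{P\in\mathrm{Ass}(I)}P^m$. *)

theory Defs
  imports Main "HOL-Library.Poly_Mapping"
begin

definition simplicial_complex :: "nat \<Rightarrow> nat set set \<Rightarrow> bool" where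
  "simplicial_complex n \<Delta> \<longleftrightarrow>
     {} \<in> \<Delta> \<and> (\<forall>F\<in>\<Delta>. F \<subseteq> {1..n}) \<and>
     (\<forall>F\<in>\<Delta>. \<forall>G. G \<subseteq> F \<longrightarrow> G \<in> \<Delta>) \<and>
     (\<forall>v\<in>{1..n}. {v} \<in> \<Delta>)"

definition facets :: "nat set set \<Rightarrow> nat set set" where
  "facets \<Gamma> = {F \<in> \<Gamma>. \<forall>G\<in>\<Gamma>. F \<subseteq> G \<longrightarrow> G = F}"

text \<open>Pure of dimension d: every facet has dimension d, i.e. d+1 vertices.\<close>
definition pure_of_dim :: "nat set set \<Rightarrow> nat \<Rightarrow> bool" where
  "pure_of_dim \<Delta> d \<longleftrightarrow> (\<forall>F\<in>facets \<Delta>. card F = d + 1)"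

definition skeleton :: "nat \<Rightarrow> nat set set \<Rightarrow> nat set set" where
  "skeleton i \<Delta> = {F \<in> \<Delta>. card F \<le> i + 1}"

type_synonym 'k mpoly = "(nat \<Rightarrow>\<^sub>0 nat) \<Rightarrow>\<^sub>0 'k"

definition polyring :: "nat \<Rightarrow> 'k::field mpoly set" where
  "polyring n = {p::'k mpoly. \<forall>m\<in>Poly_Mapping.keys p. Poly_Mapping.keys m \<subseteq> {1..n}}"

definition var :: "nat \<Rightarrow> 'k::field mpoly" where
  "var j = Poly_Mapping.single (Poly_Mapping.single j 1) 1"

definition monom_of_set :: "nat set \<Rightarrow> 'k::field mpoly" where
  "monom_of_set F = (\<Prod>j\<in>F. var j)"

definition is_ideal :: "nat \<Rightarrow> 'k::field mpoly set \<Rightarrow> bool" where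
  "is_ideal n J \<longleftrightarrow> J \<subseteq> polyring n \<and> 0 \<in> J \<and>
     (\<forall>a\<in>J. \<forall>b\<in>J. a + b \<in> J) \<and>
     (\<forall>r\<in>polyring n. \<forall>a\<in>J. r * a \<in> J)"

definition gen_ideal :: "nat \<Rightarrow> 'k::field mpoly set \<Rightarrow> 'k mpoly set" where
  "gen_ideal n S = \<Inter>{J. is_ideal n J \<and> S \<subseteq> J}"

definition ideal_prod :: "nat \<Rightarrow> 'k::field mpoly set \<Rightarrow> 'k mpoly set \<Rightarrow> 'k mpoly set" where
  "ideal_prod n I J = gen_ideal n {a * b | a b. a \<in> I \<and> b \<in> J}"

fun ideal_pow :: "nat \<Rightarrow> 'k::field mpoly set \<Rightarrow> nat \<Rightarrow> 'k mpoly set" where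
  "ideal_pow n I 0 = polyring n"
| "ideal_pow n I (Suc m) = ideal_prod n I (ideal_pow n I m)"

definition prime_ideal :: "nat \<Rightarrow> 'k::field mpoly set \<Rightarrow> bool" where
  "prime_ideal n P \<longleftrightarrow> is_ideal n P \<and> P \<noteq> polyring n \<and>
     (\<forall>a\<in>polyring n. \<forall>b\<in>polyring n. a * b \<in> P \<longrightarrow> a \<in> P \<or> b \<in> P)"

definition ass_primes :: "nat \<Rightarrow> 'k::field mpoly set \<Rightarrow> 'k mpoly set set" where
  "ass_primes n I = {P. prime_ideal n P \<and>
      (\<exists>f\<in>polyring n. P = {g \<in> polyring n. g * f \<in> I})}"

definition symb_pow :: "nat \<Rightarrow> 'k::field mpoly set \<Rightarrow> nat \<Rightarrow> 'k mpoly set" where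
  "symb_pow n I m = polyring n \<inter> \<Inter>{ideal_pow n P m | P. P \<in> ass_primes n I}"

definition facet_ideal :: "nat \<Rightarrow> nat set set \<Rightarrow> 'k::field mpoly set" where
  "facet_ideal n \<Gamma> = gen_ideal n (monom_of_set ` facets \<Gamma>)"

end

theory Submission
  imports Defs
begin

lemma polyring_0: "0 \<in> polyring n" by (simp add: polyring_def)
lemma polyring_1: "1 \<in> polyring n" by (simp add: polyring_def)

lemma polyring_add: "p \<in> polyring n \<Longrightarrow> q \<in> polyring n \<Longrightarrow> p + q \<in> polyring n"
proof -
  assume p: "p \<in> polyring n" and q: "q \<in> polyring n"
  have "\<forall>m\<in>Poly_Mapping.keys (p + q). Poly_Mapping.keys m \<subseteq> {1..n}"
  proof
    fix m assume "m \<in> Poly_Mapping.keys (p + q)"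
    then have "m \<in> Poly_Mapping.keys p \<union> Poly_Mapping.keys q" using keys_add[of p q] by (rule subsetD[rotated])
    then show "Poly_Mapping.keys m \<subseteq> {1..n}" using p q by (auto simp: polyring_def)
  qed
  then show ?thesis by (simp add: polyring_def)
qed

lemma keys_add_nat: "Poly_Mapping.keys ((a::nat \<Rightarrow>\<^sub>0 nat) + b) \<subseteq> Poly_Mapping.keys a \<union> Poly_Mapping.keys b"
  by (rule keys_add)

lemma polyring_mult: "p \<in> polyring n \<Longrightarrow> q \<in> polyring n \<Longrightarrow> p * q \<in> polyring n"
proof -
  assume p: "p \<in> polyring n" and q: "q \<in> polyring n"
  have "\<forall>m\<in>Poly_Mapping.keys (p * q). Poly_Mapping.keys m \<subseteq> {1..n}"
  proof
    fix m assume "m \<in> Poly_Mapping.keys (p * q)"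
    then have "m \<in> {a + b | a b. a \<in> Poly_Mapping.keys p \<and> b \<in> Poly_Mapping.keys q}"
      using keys_mult[of p q] by (rule subsetD[rotated])
    then obtain a b where ab: "m = a + b" "a \<in> Poly_Mapping.keys p" "b \<in> Poly_Mapping.keys q"
      by blast
    have "Poly_Mapping.keys a \<subseteq> {1..n}" using p ab(2) by (simp add: polyring_def)
    moreover have "Poly_Mapping.keys b \<subseteq> {1..n}" using q ab(3) by (simp add: polyring_def)
    ultimately show "Poly_Mapping.keys m \<subseteq> {1..n}" using keys_add_nat[of a b] ab(1) by auto
  qed
  then show ?thesis by (simp add: polyring_def)
qed

lemma is_idealI: "J \<subseteq> polyring n \<Longrightarrow> 0 \<in> J \<Longrightarrow> (\<And>a b. a \<in> J \<Longrightarrow> b \<in> J \<Longrightarrow> a + b \<in> J)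
  \<Longrightarrow> (\<And>r a. r \<in> polyring n \<Longrightarrow> a \<in> J \<Longrightarrow> r * a \<in> J) \<Longrightarrow> is_ideal n J"
  by (simp add: is_ideal_def)

lemma is_ideal_polyring: "is_ideal n (polyring n)"
  by (rule is_idealI) (auto simp: polyring_0 polyring_add polyring_mult)

lemma gen_ideal_least: "is_ideal n J \<Longrightarrow> S \<subseteq> J \<Longrightarrow> gen_ideal n S \<subseteq> J"
  unfolding gen_ideal_def by (rule Inter_lower) simp

lemma gen_ideal_superset: "S \<subseteq> gen_ideal n S"
  unfolding gen_ideal_def by (rule Inter_greatest) simp


lemma gen_ideal_ideal: assumes "S \<subseteq> polyring n" shows "is_ideal n (gen_ideal n S)"
proof -
  let ?A = "{J. is_ideal n J \<and> S \<subseteq> J}"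
  have ne: "polyring n \<in> ?A" using assms is_ideal_polyring by blast
  have 1: "\<Inter> ?A \<subseteq> polyring n" using ne by blast
  have 2: "0 \<in> \<Inter> ?A"
  proof (rule InterI)
    fix J assume "J \<in> ?A" then show "0 \<in> J" by (simp add: is_ideal_def)
  qed
  have 3: "a + b \<in> \<Inter> ?A" if ab: "a \<in> \<Inter> ?A" "b \<in> \<Inter> ?A" for a b
  proof (rule InterI)
    fix J assume J: "J \<in> ?A"
    then have "is_ideal n J" "a \<in> J" "b \<in> J" using ab by auto
    then show "a + b \<in> J" by (simp add: is_ideal_def)
  qed
  have 4: "r * a \<in> \<Inter> ?A" if ra: "r \<in> polyring n" "a \<in> \<Inter> ?A" for r a
  proof (rule InterI)
    fix J assume J: "J \<in> ?A"
    then have "is_ideal n J" "a \<in> J" using ra by auto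
    then show "r * a \<in> J" using ra(1) by (simp add: is_ideal_def)
  qed
  show ?thesis unfolding gen_ideal_def by (rule is_idealI[OF 1 2 3 4])
qed

lemma ideal_mult_right: "is_ideal n J \<Longrightarrow> a \<in> J \<Longrightarrow> r \<in> polyring n \<Longrightarrow> a * r \<in> J"
proof -
  assume "is_ideal n J" "a \<in> J" "r \<in> polyring n"
  then have "r * a \<in> J" by (simp add: is_ideal_def)
  then show ?thesis by (simp add: mult.commute)
qed

lemma var_in: "v \<in> {1..n} \<Longrightarrow> (var v :: 'k::field mpoly) \<in> polyring n"
  unfolding polyring_def var_def by simp

lemma monom_in: "F \<subseteq> {1..n} \<Longrightarrow> (monom_of_set F :: 'k::field mpoly) \<in> polyring n"
proof (cases "finite F")
  case True
  assume "F \<subseteq> {1..n}"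
  have "finite F \<Longrightarrow> F \<subseteq> {1..n} \<Longrightarrow> (prod var F :: 'k mpoly) \<in> polyring n" for F
  proof (induction F rule: finite_induct)
    case empty then show ?case by (simp add: polyring_1)
  next
    case (insert x F)
    then have "x \<in> {1..n}" "F \<subseteq> {1..n}" by auto
    then show ?case using insert by (simp add: polyring_mult var_in)
  qed
  then show ?thesis using True \<open>F \<subseteq> {1..n}\<close> unfolding monom_of_set_def by blast
next
  case False then show ?thesis by (simp add: monom_of_set_def polyring_1)
qed

lemma monom_eq: "finite F \<Longrightarrow> (monom_of_set F :: 'k::field mpoly) = Poly_Mapping.single (\<Sum>v\<in>F. Poly_Mapping.single v 1) 1"
  unfolding monom_of_set_def
  by (induction F rule: finite_induct) (auto simp: var_def mult_single one_poly_mapping.abs_eq)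

definition deg :: "(nat \<Rightarrow>\<^sub>0 nat) \<Rightarrow> nat" where
  "deg m = (\<Sum>k\<in>Poly_Mapping.keys m. Poly_Mapping.lookup m k)"

lemma deg_add: "deg (a + b) = deg a + deg b"
  unfolding deg_def by (rule setsum_keys_plus_distrib[where f = "\<lambda>k x. x"]) auto

lemma deg_sum: "finite F \<Longrightarrow> deg (\<Sum>v\<in>F. Poly_Mapping.single v 1) = card F"
proof (induction F rule: finite_induct)
  case empty then show ?case by (simp add: deg_def)
next
  case (insert x F)
  have "deg (Poly_Mapping.single x 1) = 1" by (simp add: deg_def)
  then show ?case using insert by (simp add: deg_add)
qed


definition Dg :: "nat \<Rightarrow> nat \<Rightarrow> 'k::field mpoly set" where
  "Dg n a = {p \<in> polyring n. \<forall>m\<in>Poly_Mapping.keys p. a \<le> deg m}"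

lemma Dg_mult: assumes "p \<in> Dg n a" "q \<in> Dg n b" shows "p * q \<in> Dg n (a + b)"
proof -
  have "\<forall>m\<in>Poly_Mapping.keys (p * q). a + b \<le> deg m"
  proof
    fix m assume "m \<in> Poly_Mapping.keys (p * q)"
    then have "m \<in> {x + y | x y. x \<in> Poly_Mapping.keys p \<and> y \<in> Poly_Mapping.keys q}"
      using keys_mult[of p q] by (rule subsetD[rotated])
    then obtain x y where xy: "m = x + y" "x \<in> Poly_Mapping.keys p" "y \<in> Poly_Mapping.keys q"
      by blast
    have "a \<le> deg x" using assms(1) xy(2) by (simp add: Dg_def)
    moreover have "b \<le> deg y" using assms(2) xy(3) by (simp add: Dg_def)
    ultimately show "a + b \<le> deg m" using xy(1) by (simp add: deg_add)
  qed
  moreover have "p * q \<in> polyring n" using assms by (simp add: Dg_def polyring_mult)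
  ultimately show ?thesis by (simp add: Dg_def)
qed

lemma Dg_0: "Dg n 0 = polyring n" by (auto simp: Dg_def)

lemma Dg_ideal: "is_ideal n (Dg n a)"
proof (rule is_idealI)
  show "Dg n a \<subseteq> polyring n" by (auto simp: Dg_def)
  show "0 \<in> Dg n a" by (simp add: Dg_def polyring_0)
  show "x + y \<in> Dg n a" if xy: "x \<in> Dg n a" "y \<in> Dg n a" for x y
  proof -
    have "\<forall>m\<in>Poly_Mapping.keys (x + y). a \<le> deg m"
    proof
      fix m assume "m \<in> Poly_Mapping.keys (x + y)"
      then have "m \<in> Poly_Mapping.keys x \<union> Poly_Mapping.keys y"
        using keys_add[of x y] by (rule subsetD[rotated])
      then show "a \<le> deg m" using xy by (auto simp: Dg_def)
    qed
    moreover have "x + y \<in> polyring n" using xy by (simp add: Dg_def polyring_add)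
    ultimately show ?thesis by (simp add: Dg_def)
  qed
  show "r * x \<in> Dg n a" if "r \<in> polyring n" "x \<in> Dg n a" for r x
    using Dg_mult[of r n 0 x a] that by (simp add: Dg_0)
qed

lemma monom_Dg: "finite F \<Longrightarrow> F \<subseteq> {1..n} \<Longrightarrow> (monom_of_set F :: 'k::field mpoly) \<in> Dg n (card F)"
  using monom_in[of F n] by (simp add: Dg_def monom_eq deg_sum[simplified])

lemma monom_not_Dg: "finite F \<Longrightarrow> card F < a \<Longrightarrow> (monom_of_set F :: 'k::field mpoly) \<notin> Dg n a"
  by (simp add: Dg_def monom_eq deg_sum[simplified])

lemma ideal_sub: "is_ideal n J \<Longrightarrow> J \<subseteq> polyring n" by (simp add: is_ideal_def)

lemma ideal_prod_ideal: assumes "is_ideal n A" "is_ideal n B" shows "is_ideal n (ideal_prod n A B)"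
  unfolding ideal_prod_def
proof (rule gen_ideal_ideal)
  show "{a * b |a b. a \<in> A \<and> b \<in> B} \<subseteq> polyring n"
  proof
    fix x assume "x \<in> {a * b |a b. a \<in> A \<and> b \<in> B}"
    then obtain a b where "x = a * b" "a \<in> A" "b \<in> B" by blast
    then show "x \<in> polyring n" using ideal_sub[OF assms(1)] ideal_sub[OF assms(2)] polyring_mult
      by (meson subsetD)
  qed
qed

lemma ideal_prod_gen: "a \<in> A \<Longrightarrow> b \<in> B \<Longrightarrow> a * b \<in> ideal_prod n A B"
  unfolding ideal_prod_def by (rule subsetD[OF gen_ideal_superset]) blast

lemma ideal_prod_Dg: assumes "A \<subseteq> Dg n a" "B \<subseteq> Dg n b"
  shows "(ideal_prod n A B :: 'k::field mpoly set) \<subseteq> Dg n (a + b)"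
  unfolding ideal_prod_def
proof (rule gen_ideal_least[OF Dg_ideal])
  show "{x * y |x y. x \<in> A \<and> y \<in> B} \<subseteq> Dg n (a + b)"
  proof
    fix z assume "z \<in> {x * y |x y. x \<in> A \<and> y \<in> B}"
    then obtain x y where "z = x * y" "x \<in> A" "y \<in> B" by blast
    then show "z \<in> Dg n (a + b)" using assms Dg_mult by (metis subsetD)
  qed
qed

lemma prime_var:
  assumes P: "prime_ideal n P" and F: "finite F" "F \<noteq> {}" "F \<subseteq> {1..n}"
  and m: "(monom_of_set F :: 'k::field mpoly) \<in> P"
  shows "\<exists>v\<in>F. var v \<in> P"
  using F m
proof (induction F rule: finite_ne_induct)
  case (singleton x) then show ?case by (simp add: monom_of_set_def)
next
  case (insert x F)
  have pm: "var x * monom_of_set F \<in> P" using insert by (simp add: monom_of_set_def)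
  have vx: "(var x :: 'k mpoly) \<in> polyring n" using insert var_in by auto
  have mF: "(monom_of_set F :: 'k mpoly) \<in> polyring n" using insert monom_in by auto
  have "\<forall>a\<in>polyring n. \<forall>b\<in>polyring n. a * b \<in> P \<longrightarrow> a \<in> P \<or> b \<in> P"
    using P by (simp add: prime_ideal_def)
  then have "var x \<in> P \<or> (monom_of_set F :: 'k mpoly) \<in> P"
    using vx mF pm by blast
  then show ?case using insert by auto
qed


lemma sc_sub: "simplicial_complex n \<Delta> \<Longrightarrow> G \<in> \<Delta> \<Longrightarrow> F \<subseteq> G \<Longrightarrow> F \<in> \<Delta>"
proof -
  assume "simplicial_complex n \<Delta>" "G \<in> \<Delta>" "F \<subseteq> G"
  moreover have "\<forall>F\<in>\<Delta>. \<forall>G. G \<subseteq> F \<longrightarrow> G \<in> \<Delta>" using calculation(1) by (simp add: simplicial_complex_def)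
  ultimately show ?thesis by blast
qed

lemma sc_in: "simplicial_complex n \<Delta> \<Longrightarrow> F \<in> \<Delta> \<Longrightarrow> F \<subseteq> {1..n}"
proof -
  assume "simplicial_complex n \<Delta>" "F \<in> \<Delta>"
  moreover have "\<forall>F\<in>\<Delta>. F \<subseteq> {1..n}" using calculation(1) by (simp add: simplicial_complex_def)
  ultimately show ?thesis by blast
qed

lemma sc_finite: "simplicial_complex n \<Delta> \<Longrightarrow> finite \<Delta>"
proof -
  assume sc: "simplicial_complex n \<Delta>"
  have "\<Delta> \<subseteq> Pow {1..n}" using sc_in[OF sc] by blast
  then show ?thesis by (rule finite_subset) simp
qed

lemma sc_face_finite: "simplicial_complex n \<Delta> \<Longrightarrow> F \<in> \<Delta> \<Longrightarrow> finite F \<and> F \<subseteq> {1..n}"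
  using sc_in finite_subset[of F "{1..n}"] by auto

lemma in_facet:
  assumes sc: "simplicial_complex n \<Delta>" and F: "F \<in> \<Delta>"
  shows "\<exists>G\<in>facets \<Delta>. F \<subseteq> G"
proof -
  obtain G where "G \<in> \<Delta>" "F \<subseteq> G" "\<forall>b\<in>\<Delta>. G \<subseteq> b \<longrightarrow> G = b"
    using finite_has_maximal2[OF sc_finite[OF sc] F] by auto
  then show ?thesis unfolding facets_def by auto
qed

lemma skel_facet_card:
  assumes sc: "simplicial_complex n \<Delta>" and pure: "pure_of_dim \<Delta> d" and id: "i \<le> d"
  and F: "F \<in> facets (skeleton i \<Delta>)"
  shows "card F = i + 1"
proof (rule ccontr)
  assume ne: "card F \<noteq> i + 1"
  have FD: "F \<in> \<Delta>" and Fc: "card F \<le> i + 1"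
    using F by (auto simp: facets_def skeleton_def)
  then have Flt: "card F < i + 1" using ne by simp
  have finF: "finite F" using sc_face_finite[OF sc FD] by blast
  obtain G where G: "G \<in> facets \<Delta>" "F \<subseteq> G" using in_facet[OF sc FD] by blast
  have GD: "G \<in> \<Delta>" using G by (simp add: facets_def)
  have finG: "finite G" using sc_face_finite[OF sc GD] by blast
  have cG: "card G = d + 1" using pure G by (simp add: pure_of_dim_def)
  have "card (G - F) = card G - card F" using G finF by (simp add: card_Diff_subset)
  then have le: "i + 1 - card F \<le> card (G - F)" using cG id by simp
  obtain B where B: "B \<subseteq> G - F" "card B = i + 1 - card F"
    using obtain_subset_with_card_n[OF le] by blast
  have finB: "finite B" using B finG finite_subset by blast
  let ?F' = "F \<union> B"
  have dj: "F \<inter> B = {}" using B by blast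
  have cF': "card ?F' = i + 1" using card_Un_disjoint[OF finF finB dj] B Flt by simp
  have "?F' \<subseteq> G" using B G by blast
  then have "?F' \<in> \<Delta>" using sc_sub[OF sc GD] by blast
  then have "?F' \<in> skeleton i \<Delta>" using cF' by (simp add: skeleton_def)
  moreover have "F \<subseteq> ?F'" by blast
  ultimately have "?F' = F" using F unfolding facets_def by blast
  then show False using cF' Flt by simp
qed

lemma sub_facet_skel:
  assumes sc: "simplicial_complex n \<Delta>" and GD: "G \<in> \<Delta>" and FG: "F \<subseteq> G" and cF: "card F = i + 1"
  shows "F \<in> facets (skeleton i \<Delta>)"
proof -
  have FD: "F \<in> \<Delta>" using sc_sub[OF sc GD FG] .
  have finF: "finite F" using sc_face_finite[OF sc FD] by blast
  have "\<forall>G'\<in>skeleton i \<Delta>. F \<subseteq> G' \<longrightarrow> G' = F"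
  proof (intro ballI impI)
    fix G' assume G': "G' \<in> skeleton i \<Delta>" "F \<subseteq> G'"
    have G'D: "G' \<in> \<Delta>" and cG': "card G' \<le> i + 1" using G'(1) by (auto simp: skeleton_def)
    have "finite G'" using sc_face_finite[OF sc G'D] by blast
    from card_seteq[OF this G'(2)] cG' cF show "G' = F" by simp
  qed
  then show ?thesis using FD cF by (simp add: facets_def skeleton_def)
qed


lemma ideal_mult_left: "is_ideal n J \<Longrightarrow> r \<in> polyring n \<Longrightarrow> a \<in> J \<Longrightarrow> r * a \<in> J"
  unfolding is_ideal_def by blast

theorem proposition6p2:
  fixes \<Delta> :: "nat set set" and n d :: nat
  assumes "simplicial_complex n \<Delta>" and "pure_of_dim \<Delta> d"
  shows "\<forall>i. 1 \<le> i \<and> i \<le> d - 1 \<longrightarrow>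
           (\<exists>j\<ge>1. symb_pow n (facet_ideal n (skeleton i \<Delta>) :: 'k::field mpoly set) j
                    \<noteq> ideal_pow n (facet_ideal n (skeleton i \<Delta>)) j)"
proof (intro allI impI)
  fix i assume i: "1 \<le> i \<and> i \<le> d - 1"
  note sc = assms(1) and pure = assms(2)
  let ?k = "i + 1"
  have id: "i \<le> d" using i by arith
  have i1: "1 \<le> i" and id2: "i + 2 \<le> d + 1" using i by arith+
  define I where "I = (facet_ideal n (skeleton i \<Delta>) :: 'k mpoly set)"
  have gens: "monom_of_set ` facets (skeleton i \<Delta>) \<subseteq> (Dg n ?k :: 'k mpoly set)"
  proof
    fix x assume "x \<in> monom_of_set ` facets (skeleton i \<Delta>)"
    then obtain F where F: "F \<in> facets (skeleton i \<Delta>)" "x = monom_of_set F" by blast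
    have "F \<in> \<Delta>" using F by (simp add: facets_def skeleton_def)
    then have fF: "finite F" "F \<subseteq> {1..n}" using sc_face_finite[OF sc] by auto
    have cF: "card F = ?k" using skel_facet_card[OF sc pure id F(1)] .
    have "x \<in> Dg n (card F)" unfolding F(2) by (rule monom_Dg[OF fF])
    then show "x \<in> Dg n ?k" using cF by simp
  qed
  have gens_poly: "monom_of_set ` facets (skeleton i \<Delta>) \<subseteq> (polyring n :: 'k mpoly set)"
    using gens by (auto simp: Dg_def)
  have I_ideal: "is_ideal n I" unfolding I_def facet_ideal_def by (rule gen_ideal_ideal[OF gens_poly])
  have I_Dg: "I \<subseteq> Dg n ?k" unfolding I_def facet_ideal_def
    by (rule gen_ideal_least[OF Dg_ideal gens])
  have I_gen: "monom_of_set F \<in> I" if "F \<in> facets (skeleton i \<Delta>)" for F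
    unfolding I_def facet_ideal_def by (rule subsetD[OF gen_ideal_superset], rule imageI, rule that)
  have e: "{} \<in> \<Delta>" using sc by (simp add: simplicial_complex_def)
  obtain G where Gf: "G \<in> facets \<Delta>" using in_facet[OF sc e] by blast
  have G: "G \<in> \<Delta>" using Gf by (simp add: facets_def)
  have cG: "card G = d + 1" using pure Gf by (simp add: pure_of_dim_def)
  have finG: "finite G" "G \<subseteq> {1..n}" using sc_face_finite[OF sc G(1)] by auto
  have le: "?k + 1 \<le> card G" using cG id2 by simp
  obtain H where H: "H \<subseteq> G" "card H = ?k + 1"
    using obtain_subset_with_card_n[OF le] by blast
  have finH: "finite H" "H \<subseteq> {1..n}" using H finG finite_subset by auto
  let ?x = "monom_of_set H :: 'k mpoly"
  have x_poly: "?x \<in> polyring n" using monom_in finH by blast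
  have "?x \<notin> ideal_pow n I 2"
  proof
    assume "?x \<in> ideal_pow n I 2"
    moreover have "ideal_pow n I 2 \<subseteq> Dg n (?k + (?k + 0))"
    proof -
      have "ideal_prod n I (polyring n) \<subseteq> Dg n (?k + 0)"
        by (rule ideal_prod_Dg[OF I_Dg]) (simp add: Dg_0)
      then have "ideal_prod n I (ideal_prod n I (polyring n)) \<subseteq> Dg n (?k + (?k + 0))"
        by (rule ideal_prod_Dg[OF I_Dg])
      then show ?thesis by (simp add: numeral_2_eq_2)
    qed
    ultimately have "?x \<in> Dg n (?k + (?k + 0))" by blast
    moreover have "?x \<notin> Dg n (?k + (?k + 0))"
      by (rule monom_not_Dg) (use finH H i1 in auto)
    ultimately show False by blast
  qed
  moreover have "?x \<in> symb_pow n I 2"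
  proof -
    have "?x \<in> ideal_pow n P 2" if P: "P \<in> ass_primes n I" for P
    proof -
      have Pp: "prime_ideal n P" using P by (simp add: ass_primes_def)
      obtain f where f: "f \<in> polyring n" "P = {g \<in> polyring n. g * f \<in> I}"
        using P by (auto simp: ass_primes_def)
      have IP: "I \<subseteq> P"
      proof
        fix g assume g: "g \<in> I"
        have "g \<in> polyring n" using ideal_sub[OF I_ideal] g by blast
        moreover have "g * f \<in> I" using ideal_mult_right[OF I_ideal g f(1)] .
        ultimately show "g \<in> P" using f(2) by simp
      qed
      have Pi: "is_ideal n P" using Pp by (simp add: prime_ideal_def)
      let ?C = "{v \<in> H. var v \<in> P}"
      have finC: "finite ?C" using finH by simp
      have two: "2 \<le> card ?C"
      proof (rule ccontr)
        assume "\<not> 2 \<le> card ?C"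
        then have c1: "card ?C \<le> 1" by simp
        have "card (H - ?C) = card H - card ?C"
          using finH by (intro card_Diff_subset) auto
        then have le2: "?k \<le> card (H - ?C)" using H c1 by simp
        obtain F where F: "F \<subseteq> H - ?C" "card F = ?k"
          using obtain_subset_with_card_n[OF le2] by blast
        have FH: "F \<subseteq> G" using F H by blast
        have FF: "F \<in> facets (skeleton i \<Delta>)"
          using sub_facet_skel[OF sc G(1) FH F(2)] .
        have finF: "finite F" using F finH finite_subset by blast
        have neF: "F \<noteq> {}" using F(2) by auto
        have FN: "F \<subseteq> {1..n}" using F finH by blast
        have "monom_of_set F \<in> P" using I_gen[OF FF] IP by blast
        then obtain v where v: "v \<in> F" "var v \<in> P" using prime_var[OF Pp finF neF FN] by blast
        then have "v \<in> ?C" using F by blast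
        then show False using v F by blast
      qed
      obtain S where S: "S \<subseteq> ?C" "card S = 2"
        using obtain_subset_with_card_n[OF two] by blast
      obtain u w where Suw: "S = {u, w}" "u \<noteq> w" using S(2) card_2_iff by metis
      have "\<exists>u\<in>?C. \<exists>w\<in>?C. u \<noteq> w" using S(1) Suw by blast
      then obtain u w where uw: "u \<in> H" "w \<in> H" "var u \<in> P" "var w \<in> P" "u \<noteq> w" by blast
      define R where "R = H - {u, w}"
      have HR: "H = insert u (insert w R)" "u \<notin> insert w R" "w \<notin> R" "finite R"
        using uw finH by (auto simp: R_def)
      have p1: "prod var (insert u (insert w R)) = (var u :: 'k mpoly) * prod var (insert w R)"
        by (rule prod.insert) (use HR in auto)
      have p2: "prod var (insert w R) = (var w :: 'k mpoly) * prod var R"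
        by (rule prod.insert) (use HR in auto)
      have xe: "?x = monom_of_set R * (var u * (var w * 1))"
        unfolding monom_of_set_def HR(1)[symmetric] using p1 p2 HR(1) by (simp add: mult_ac)
      have P1: "is_ideal n (ideal_pow n P 1)"
        using ideal_prod_ideal[OF Pi is_ideal_polyring] by simp
      have P2: "is_ideal n (ideal_pow n P 2)"
        using ideal_prod_ideal[OF Pi P1] by (simp add: numeral_2_eq_2)
      have "var w * 1 \<in> ideal_prod n P (polyring n)" using ideal_prod_gen[OF uw(4) polyring_1] .
      then have "var w * 1 \<in> ideal_pow n P 1" by simp
      then have "var u * (var w * 1) \<in> ideal_prod n P (ideal_pow n P 1)"
        using ideal_prod_gen[OF uw(3)] by blast
      then have m2: "var u * (var w * 1) \<in> ideal_pow n P 2" by (simp add: numeral_2_eq_2)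
      have "R \<subseteq> {1..n}" using finH R_def by blast
      then have "monom_of_set R \<in> polyring n" using monom_in by blast
      from ideal_mult_left[OF P2 this m2] show ?thesis using xe by simp
    qed
    then show ?thesis using x_poly by (auto simp: symb_pow_def)
  qed
  ultimately show "\<exists>j\<ge>1. symb_pow n (facet_ideal n (skeleton i \<Delta>) :: 'k::field mpoly set) j
                    \<noteq> ideal_pow n (facet_ideal n (skeleton i \<Delta>)) j"
    unfolding I_def[symmetric] by (intro exI[of _ 2]) auto
qed

end
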